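(* There exists an absolute constant $\tau_0>1$ such that for every $\tau\in(1,\tau_0)$ there exists a compact set $K\subset\mathbb{R}$ with Newhouse thickness $\tau(K)=\tau$, having a unique largest bounded gap, such that $K$ contains no configuration of the form $\{x-t,\,x,\,x+t^2\}$ with $t>0$ and $x$ one of the two endpoints of the largest gap of $K$.
   Context: For a compact set $K\subset\mathbb{R}$, a gap of $K$ is a connected component of $\mathbb{R}\setminus K$. If $u$ is the right endpoint of a bounded gap $G$, the bridge at $u$ is the maximal interval $B=[u,v]$ such that every gap $G'$ of $K$ with $G'\subset B$ satisfies $|G'|\le|G|$; bridges at left endpoints of bounded gaps are defined symmetrically (maximal intervals $[v,u]$ with the same property). For such an endpoint $u$, set $\tau(K,u)=|B|/|G|$. The Newhouse thickness of $K$ is $\tau(K)=\inf_u\tau(K,u)$, the infimum over all endpoints $u$ of bounded gaps of $K$. *)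

theory Defs
  imports "HOL-Analysis.Analysis"
begin

definition gaps :: "real set \<Rightarrow> real set set" where
  "gaps K = components (- K)"

definition bounded_gaps :: "real set \<Rightarrow> real set set" where
  "bounded_gaps K = {G \<in> gaps K. bounded G}"

definition gap_len :: "real set \<Rightarrow> real" where
  "gap_len G = Sup G - Inf G"

definition right_bridge_len :: "real set \<Rightarrow> real set \<Rightarrow> real" where
  "right_bridge_len K G = Sup {v - Sup G | v. v \<in> K \<and> Sup G \<le> v \<and>
      (\<forall>G' \<in> gaps K. G' \<subseteq> {Sup G..v} \<longrightarrow> gap_len G' \<le> gap_len G)}"

definition left_bridge_len :: "real set \<Rightarrow> real set \<Rightarrow> real" where
  "left_bridge_len K G = Sup {Inf G - v | v. v \<in> K \<and> v \<le> Inf G \<and>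
      (\<forall>G' \<in> gaps K. G' \<subseteq> {v..Inf G} \<longrightarrow> gap_len G' \<le> gap_len G)}"

definition newhouse_thickness :: "real set \<Rightarrow> real" where
  "newhouse_thickness K =
     Inf ((\<lambda>G. right_bridge_len K G / gap_len G) ` bounded_gaps K \<union>
          (\<lambda>G. left_bridge_len K G / gap_len G) ` bounded_gaps K)"

end

theory Submission
  imports Defs
begin

lemma comp_gen:
  fixes S C :: "real set"
  assumes "C \<noteq> {}" "C \<subseteq> S" "connected C"
    and sep: "\<And>x y. x \<in> C \<Longrightarrow> y \<notin> C \<Longrightarrow> \<exists>z. z \<notin> S \<and> (x \<le> z \<and> z \<le> y \<or> y \<le> z \<and> z \<le> x)"
  shows "C \<in> components S"
  unfolding in_components_maximal
proof (intro conjI assms allI impI)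
  fix D assume D: "D \<noteq> {} \<and> C \<subseteq> D \<and> D \<subseteq> S \<and> connected D"
  show "D = C"
  proof (rule ccontr)
    assume "D \<noteq> C"
    with D obtain y where y: "y \<in> D" "y \<notin> C" by blast
    obtain x where x: "x \<in> C" using assms(1) by blast
    obtain z where z: "z \<notin> S" "x \<le> z \<and> z \<le> y \<or> y \<le> z \<and> z \<le> x" using sep[OF x y(2)] by blast
    have iD: "is_interval D" using D is_interval_connected_1 by blast
    have "x \<in> D" using D x by blast
    hence "z \<in> D" using iD y(1) z(2) unfolding is_interval_1 by blast
    thus False using D z(1) by blast
  qed
qed

lemma comp_open:
  fixes S :: "real set"
  assumes "a < b" "{a<..<b} \<subseteq> S" "a \<notin> S" "b \<notin> S"
  shows "{a<..<b} \<in> components S"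
proof (rule comp_gen)
  show "{a<..<b} \<noteq> {}" using assms(1) by simp
  show "connected {a<..<b}" by simp
  fix x y assume "x \<in> {a<..<b}" "y \<notin> {a<..<b}"
  thus "\<exists>z. z \<notin> S \<and> (x \<le> z \<and> z \<le> y \<or> y \<le> z \<and> z \<le> x)"
    using assms by (metis greaterThanLessThan_iff le_less not_le)
qed (use assms in auto)

lemma comp_left:
  fixes S :: "real set"
  assumes "{..<a} \<subseteq> S" "a \<notin> S"
  shows "{..<a} \<in> components S"
proof (rule comp_gen)
  show "{..<a} \<noteq> {}" using lt_ex[of a] by auto
  show "connected {..<a}" by simp
  fix x y assume "x \<in> {..<a}" "y \<notin> {..<a}"
  thus "\<exists>z. z \<notin> S \<and> (x \<le> z \<and> z \<le> y \<or> y \<le> z \<and> z \<le> x)"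
    using assms by (intro exI[of _ a]) auto
qed (use assms in auto)

lemma comp_right:
  fixes S :: "real set"
  assumes "{b<..} \<subseteq> S" "b \<notin> S"
  shows "{b<..} \<in> components S"
proof (rule comp_gen)
  show "{b<..} \<noteq> {}" using gt_ex[of b] by auto
  show "connected {b<..}" by simp
  fix x y assume "x \<in> {b<..}" "y \<notin> {b<..}"
  thus "\<exists>z. z \<notin> S \<and> (x \<le> z \<and> z \<le> y \<or> y \<le> z \<and> z \<le> x)"
    using assms by (intro exI[of _ b]) auto
qed (use assms in auto)

lemma Iio_sub_Icc: "\<not> ({..<c} \<subseteq> {u..w::real})"
proof
  assume "{..<c} \<subseteq> {u..w}"
  moreover have "min c u - 1 \<in> {..<c}" by simp
  ultimately have "min c u - 1 \<in> {u..w}" by blast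
  thus False by (auto simp: min_def split: if_splits)
qed

lemma Ioi_sub_Icc: "\<not> ({c<..} \<subseteq> {u..w::real})"
proof
  assume "{c<..} \<subseteq> {u..w}"
  moreover have "max c w + 1 \<in> {c<..}" by simp
  ultimately have "max c w + 1 \<in> {u..w}" by blast
  thus False by (auto simp: max_def split: if_splits)
qed

lemma gap_len_Ioo: "x < y \<Longrightarrow> gap_len {x<..<y} = y - (x::real)"
  by (simp add: gap_len_def)

lemma not_bounded_Iio: "\<not> bounded {..<c::real}"
proof
  assume "bounded {..<c}"
  then obtain B where B: "\<forall>x\<in>{..<c}. \<bar>x\<bar> \<le> B" by (auto simp: bounded_real)
  have "- \<bar>B\<bar> - \<bar>c\<bar> - 1 \<in> {..<c}" by simp
  with B have "\<bar>- \<bar>B\<bar> - \<bar>c\<bar> - 1\<bar> \<le> B" by blast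
  thus False by simp
qed

lemma not_bounded_Ioi: "\<not> bounded {(c::real)<..}"
proof
  assume "bounded {c<..}"
  then obtain B where B: "\<forall>x\<in>{c<..}. \<bar>x\<bar> \<le> B" by (auto simp: bounded_real)
  have "\<bar>B\<bar> + \<bar>c\<bar> + 1 \<in> {c<..}" by simp
  with B have "\<bar>\<bar>B\<bar> + \<bar>c\<bar> + 1\<bar> \<le> B" by blast
  thus False by simp
qed

definition KK :: "real \<Rightarrow> real set" where
  "KK a = {-17/5..-19/10} \<union> {-99/100..-13/25} \<union> {-a..0} \<union> {1..199/100} \<union> {131/50..33/10}"

lemma gaps_KK:
  assumes a: "13/50 < a" "a < 269/1000"
  shows "gaps (KK a) = {{..< -17/5}, {-19/10<..< -99/100}, {-13/25<..< -a}, {0<..<1},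
      {199/100<..<131/50}, {33/10<..}}" (is "_ = ?S")
proof
  have c1: "{..< -17/5} \<in> components (- KK a)"
    using a by (intro comp_left) (auto simp: KK_def)
  have c2: "{-19/10<..< -99/100} \<in> components (- KK a)"
    using a by (intro comp_open) (auto simp: KK_def)
  have c3: "{-13/25<..< -a} \<in> components (- KK a)"
    using a by (intro comp_open) (auto simp: KK_def)
  have c4: "{0<..<1} \<in> components (- KK a)"
    using a by (intro comp_open) (auto simp: KK_def)
  have c5: "{199/100<..<131/50} \<in> components (- KK a)"
    using a by (intro comp_open) (auto simp: KK_def)
  have c6: "{33/10<..} \<in> components (- KK a)"
    using a by (intro comp_right) (auto simp: KK_def)
  show "?S \<subseteq> gaps (KK a)" using c1 c2 c3 c4 c5 c6 by (auto simp: gaps_def)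
  show "gaps (KK a) \<subseteq> ?S"
  proof
    fix C assume C: "C \<in> gaps (KK a)"
    hence C': "C \<in> components (- KK a)" by (simp add: gaps_def)
    then obtain x where x: "x \<in> C" using in_components_nonempty by blast
    have "x \<notin> KK a" using in_components_subset[OF C'] x by blast
    hence "x \<in> {..< -17/5} \<or> x \<in> {-19/10<..< -99/100} \<or> x \<in> {-13/25<..< -a} \<or> x \<in> {0<..<1} \<or>
      x \<in> {199/100<..<131/50} \<or> x \<in> {33/10<..}"
      unfolding KK_def by (simp only: Un_iff atLeastAtMost_iff lessThan_iff greaterThan_iff
         greaterThanLessThan_iff de_Morgan_conj not_le) linarith
    thus "C \<in> ?S"
    proof (elim disjE)
      assume "x \<in> {..< -17/5}" thus ?thesis using components_eq[OF C' c1] x by blast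
    next
      assume "x \<in> {-19/10<..< -99/100}" thus ?thesis using components_eq[OF C' c2] x by blast
    next
      assume "x \<in> {-13/25<..< -a}" thus ?thesis using components_eq[OF C' c3] x by blast
    next
      assume "x \<in> {0<..<1}" thus ?thesis using components_eq[OF C' c4] x by blast
    next
      assume "x \<in> {199/100<..<131/50}" thus ?thesis using components_eq[OF C' c5] x by blast
    next
      assume "x \<in> {33/10<..}" thus ?thesis using components_eq[OF C' c6] x by blast
    qed
  qed
qed

lemma bgaps_KK:
  assumes a: "13/50 < a" "a < 269/1000"
  shows "bounded_gaps (KK a) = {{-19/10<..< -99/100}, {-13/25<..< -a}, {0<..<1},
      {199/100<..<131/50}}"
  unfolding bounded_gaps_def gaps_KK[OF a]
  by (auto simp: not_bounded_Iio not_bounded_Ioi)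

lemma rb_gen:
  assumes "w \<in> K" "Sup G \<le> w"
    "\<forall>G'\<in>gaps K. G' \<subseteq> {Sup G..w} \<longrightarrow> gap_len G' \<le> gap_len G"
    "\<And>v. v \<in> K \<Longrightarrow> w < v \<Longrightarrow> \<exists>G'\<in>gaps K. G' \<subseteq> {Sup G..v} \<and> gap_len G < gap_len G'"
  shows "right_bridge_len K G = w - Sup G"
  unfolding right_bridge_len_def
proof (rule cSup_eq_maximum)
  show "w - Sup G \<in> {v - Sup G |v. v \<in> K \<and> Sup G \<le> v \<and>
      (\<forall>G'\<in>gaps K. G' \<subseteq> {Sup G..v} \<longrightarrow> gap_len G' \<le> gap_len G)}"
    using assms(1-3) by blast
next
  fix x assume "x \<in> {v - Sup G |v. v \<in> K \<and> Sup G \<le> v \<and>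
      (\<forall>G'\<in>gaps K. G' \<subseteq> {Sup G..v} \<longrightarrow> gap_len G' \<le> gap_len G)}"
  then obtain v where v: "x = v - Sup G" "v \<in> K"
    "\<forall>G'\<in>gaps K. G' \<subseteq> {Sup G..v} \<longrightarrow> gap_len G' \<le> gap_len G" by blast
  have "\<not> w < v"
  proof
    assume "w < v"
    from assms(4)[OF v(2) this] obtain G' where "G'\<in>gaps K" "G' \<subseteq> {Sup G..v}" "gap_len G < gap_len G'" by blast
    with v(3) show False by fastforce
  qed
  thus "x \<le> w - Sup G" using v(1) by simp
qed

lemma lb_gen:
  assumes "w \<in> K" "w \<le> Inf G"
    "\<forall>G'\<in>gaps K. G' \<subseteq> {w..Inf G} \<longrightarrow> gap_len G' \<le> gap_len G"
    "\<And>v. v \<in> K \<Longrightarrow> v < w \<Longrightarrow> \<exists>G'\<in>gaps K. G' \<subseteq> {v..Inf G} \<and> gap_len G < gap_len G'"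
  shows "left_bridge_len K G = Inf G - w"
  unfolding left_bridge_len_def
proof (rule cSup_eq_maximum)
  show "Inf G - w \<in> {Inf G - v |v. v \<in> K \<and> v \<le> Inf G \<and>
      (\<forall>G'\<in>gaps K. G' \<subseteq> {v..Inf G} \<longrightarrow> gap_len G' \<le> gap_len G)}"
    using assms(1-3) by blast
next
  fix x assume "x \<in> {Inf G - v |v. v \<in> K \<and> v \<le> Inf G \<and>
      (\<forall>G'\<in>gaps K. G' \<subseteq> {v..Inf G} \<longrightarrow> gap_len G' \<le> gap_len G)}"
  then obtain v where v: "x = Inf G - v" "v \<in> K"
    "\<forall>G'\<in>gaps K. G' \<subseteq> {v..Inf G} \<longrightarrow> gap_len G' \<le> gap_len G" by blast
  have "\<not> v < w"
  proof
    assume "v < w"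
    from assms(4)[OF v(2) this] obtain G' where "G'\<in>gaps K" "G' \<subseteq> {v..Inf G}" "gap_len G < gap_len G'" by blast
    with v(3) show False by fastforce
  qed
  thus "x \<le> Inf G - w" using v(1) by simp
qed

lemmas sub_simps = Iio_sub_Icc Ioi_sub_Icc greaterThanLessThan_subseteq_atLeastAtMost_iff gap_len_Ioo

context
  fixes a :: real
  assumes a: "13/50 < a" "a < 269/1000"
begin

lemma mem_KK: "x \<in> KK a \<longleftrightarrow> (-17/5 \<le> x \<and> x \<le> -19/10) \<or> (-99/100 \<le> x \<and> x \<le> -13/25) \<or>
   (-a \<le> x \<and> x \<le> 0) \<or> (1 \<le> x \<and> x \<le> 199/100) \<or> (131/50 \<le> x \<and> x \<le> 33/10)"
  by (auto simp: KK_def)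

lemma a_lt: "-13/25 < -a" using a by simp

lemma rbA: "right_bridge_len (KK a) {-19/10<..< -99/100} = 99/100"
proof -
  have "right_bridge_len (KK a) {-19/10<..< -99/100} = 0 - Sup {-19/10<..< -99/100::real}"
  proof (rule rb_gen)
    fix v assume "v \<in> KK a" "0 < v"
    hence "1 \<le> v" using a by (auto simp: mem_KK)
    thus "\<exists>G'\<in>gaps (KK a). G' \<subseteq> {Sup {-19/10<..< -99/100}..v} \<and>
        gap_len {-19/10<..< -99/100} < gap_len G'"
      by (intro bexI[of _ "{0<..<1}"]) (auto simp: gaps_KK[OF a] sub_simps)
  qed (use a in \<open>auto simp: mem_KK gaps_KK[OF a] sub_simps\<close>)
  thus ?thesis by simp
qed

lemma rbB: "right_bridge_len (KK a) {-13/25<..< -a} = a"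
proof -
  have "right_bridge_len (KK a) {-13/25<..< -a} = 0 - Sup {-13/25<..< -a}"
  proof (rule rb_gen)
    fix v assume "v \<in> KK a" "0 < v"
    hence "1 \<le> v" using a by (auto simp: mem_KK)
    thus "\<exists>G'\<in>gaps (KK a). G' \<subseteq> {Sup {-13/25<..< -a}..v} \<and>
        gap_len {-13/25<..< -a} < gap_len G'"
      using a by (intro bexI[of _ "{0<..<1}"]) (auto simp: gaps_KK[OF a] sub_simps)
  qed (use a in \<open>auto simp: mem_KK gaps_KK[OF a] sub_simps\<close>)
  thus ?thesis using a by simp
qed

lemma lbA: "left_bridge_len (KK a) {-19/10<..< -99/100::real} = 3/2"
proof -
  have "left_bridge_len (KK a) {-19/10<..< -99/100::real} = Inf {-19/10<..< -99/100::real} - -17/5"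
  proof (rule lb_gen)
    fix v assume "v \<in> KK a" "v < -17/5"
    thus "\<exists>G'\<in>gaps (KK a). G' \<subseteq> {v..Inf {-19/10<..< -99/100::real}} \<and>
        gap_len {-19/10<..< -99/100::real} < gap_len G'" using a by (auto simp: mem_KK)
  qed (use a in \<open>auto simp: mem_KK gaps_KK[OF a] sub_simps\<close>)
  thus ?thesis using a by simp
qed

lemma lbB: "left_bridge_len (KK a) {-13/25<..< -a} = 47/100"
proof -
  have "left_bridge_len (KK a) {-13/25<..< -a} = Inf {-13/25<..< -a} - -99/100"
  proof (rule lb_gen)
    fix v assume "v \<in> KK a" "v < -99/100"
    hence "v \<le> -19/10" using a by (auto simp: mem_KK)
    thus "\<exists>G'\<in>gaps (KK a). G' \<subseteq> {v..Inf {-13/25<..< -a}} \<and>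
        gap_len {-13/25<..< -a} < gap_len G'"
      using a by (intro bexI[of _ "{-19/10<..< -99/100}"]) (auto simp: gaps_KK[OF a] sub_simps)
  qed (use a in \<open>auto simp: mem_KK gaps_KK[OF a] sub_simps\<close>)
  thus ?thesis using a by simp
qed

lemma rbM: "right_bridge_len (KK a) {0<..<1::real} = 23/10"
proof -
  have "right_bridge_len (KK a) {0<..<1::real} = 33/10 - Sup {0<..<1::real}"
  proof (rule rb_gen)
    fix v assume "v \<in> KK a" "33/10 < v"
    thus "\<exists>G'\<in>gaps (KK a). G' \<subseteq> {Sup {0<..<1::real}..v} \<and>
        gap_len {0<..<1::real} < gap_len G'" using a by (auto simp: mem_KK)
  qed (use a in \<open>auto simp: mem_KK gaps_KK[OF a] sub_simps\<close>)
  thus ?thesis using a by simp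
qed

lemma lbM: "left_bridge_len (KK a) {0<..<1::real} = 17/5"
proof -
  have "left_bridge_len (KK a) {0<..<1::real} = Inf {0<..<1::real} - -17/5"
  proof (rule lb_gen)
    fix v assume "v \<in> KK a" "v < -17/5"
    thus "\<exists>G'\<in>gaps (KK a). G' \<subseteq> {v..Inf {0<..<1::real}} \<and>
        gap_len {0<..<1::real} < gap_len G'" using a by (auto simp: mem_KK)
  qed (use a in \<open>auto simp: mem_KK gaps_KK[OF a] sub_simps\<close>)
  thus ?thesis using a by simp
qed

lemma rbC: "right_bridge_len (KK a) {199/100<..<131/50::real} = 17/25"
proof -
  have "right_bridge_len (KK a) {199/100<..<131/50::real} = 33/10 - Sup {199/100<..<131/50::real}"
  proof (rule rb_gen)
    fix v assume "v \<in> KK a" "33/10 < v"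
    thus "\<exists>G'\<in>gaps (KK a). G' \<subseteq> {Sup {199/100<..<131/50::real}..v} \<and>
        gap_len {199/100<..<131/50::real} < gap_len G'" using a by (auto simp: mem_KK)
  qed (use a in \<open>auto simp: mem_KK gaps_KK[OF a] sub_simps\<close>)
  thus ?thesis using a by simp
qed

lemma lbC: "left_bridge_len (KK a) {199/100<..<131/50::real} = 99/100"
proof -
  have "left_bridge_len (KK a) {199/100<..<131/50::real} = Inf {199/100<..<131/50::real} - 1"
  proof (rule lb_gen)
    fix v assume "v \<in> KK a" "v < 1"
    hence "v \<le> 0" using a by (auto simp: mem_KK)
    thus "\<exists>G'\<in>gaps (KK a). G' \<subseteq> {v..Inf {199/100<..<131/50::real}} \<and>
        gap_len {199/100<..<131/50::real} < gap_len G'"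
      using a by (intro bexI[of _ "{0<..<1}"]) (auto simp: gaps_KK[OF a] sub_simps)
  qed (use a in \<open>auto simp: mem_KK gaps_KK[OF a] sub_simps\<close>)
  thus ?thesis using a by simp
qed

lemma thick_KK: "newhouse_thickness (KK a) = a / (13/25 - a)"
proof -
  have d: "13/25 - a > 0" using a by simp
  have key: "a / (13/25 - a) \<le> 68/63" using a d by (simp add: divide_le_eq)
  have k2: "a / (13/25 - a) \<le> (47/100) / (13/25 - a)" using a d by (intro divide_right_mono) auto
  have gl: "gap_len {-19/10<..< -99/100::real} = 91/100" "gap_len {-13/25<..< -a} = 13/25 - a"
    "gap_len {0<..<1::real} = 1" "gap_len {199/100<..<131/50::real} = 63/100"
    using a by (simp_all add: gap_len_Ioo)
  show ?thesis
    unfolding newhouse_thickness_def bgaps_KK[OF a] image_insert image_empty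
      rbA rbB rbM rbC lbA lbB lbM lbC gl
  proof (rule cInf_eq_minimum)
    have nums: "(68/63::real) \<le> 99/100/(91/100)" "(68/63::real) \<le> 23/10/1" "(68/63::real) \<le> 17/25/(63/100)"
      "(68/63::real) \<le> 3/2/(91/100)" "(68/63::real) \<le> 17/5/1" "(68/63::real) \<le> 99/100/(63/100)"
      by simp_all
    have "\<forall>x\<in>{99 / 100 / (91 / 100), a / (13 / 25 - a), 23 / 10 / 1, 17 / 25 / (63 / 100)} \<union>
       {3 / 2 / (91 / 100), 47 / 100 / (13 / 25 - a), 17 / 5 / 1, 99 / 100 / (63 / 100)}.
        a / (13 / 25 - a) \<le> x"
      unfolding ball_Un ball_simps by (intro conjI TrueI order_refl k2 order_trans[OF key nums(1)] order_trans[OF key nums(2)] order_trans[OF key nums(3)] order_trans[OF key nums(4)] order_trans[OF key nums(5)] order_trans[OF key nums(6)])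
    thus "\<And>x. x \<in> {99 / 100 / (91 / 100), a / (13 / 25 - a), 23 / 10 / 1, 17 / 25 / (63 / 100)} \<union>
       {3 / 2 / (91 / 100), 47 / 100 / (13 / 25 - a), 17 / 5 / 1, 99 / 100 / (63 / 100)} \<Longrightarrow>
        a / (13 / 25 - a) \<le> x" by blast
  qed simp
qed

lemma sq_le: "0 \<le> (t::real) \<Longrightarrow> t \<le> b \<Longrightarrow> t^2 \<le> b^2" by (rule power_mono)

lemma notriple:
  assumes t: "t > 0" and x: "x \<in> {Inf {0<..<1::real}, Sup {0<..<1::real}}"
    and m1: "x - t \<in> KK a" and m2: "x + t^2 \<in> KK a"
  shows False
proof -
  have x01: "x = 0 \<or> x = 1" using x by simp
  thus False
  proof
    assume x0: "x = 0"
    have tpos: "t^2 > 0" using t by simp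
    have A: "t \<le> a \<or> (13/25 \<le> t \<and> t \<le> 99/100) \<or> (19/10 \<le> t \<and> t \<le> 17/5)"
      using m1 x0 t by (auto simp: mem_KK)
    have B: "(1 \<le> t^2 \<and> t^2 \<le> 199/100) \<or> (131/50 \<le> t^2 \<and> t^2 \<le> 33/10)"
      using m2 x0 tpos by (auto simp: mem_KK)
    from A show False
    proof (elim disjE conjE)
      assume "t \<le> a"
      hence "t^2 \<le> (269/1000)^2" using t a by (intro sq_le) auto
      moreover have "(269/1000::real)^2 < 1" by (simp add: power2_eq_square)
      ultimately show False using B by linarith
    next
      assume "t \<le> 99/100"
      hence "t^2 \<le> (99/100)^2" using t by (intro sq_le) auto
      moreover have "(99/100::real)^2 < 1" by (simp add: power2_eq_square)
      ultimately show False using B by linarith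
    next
      assume "19/10 \<le> t"
      hence "(19/10)^2 \<le> t^2" by (intro sq_le) auto
      moreover have "(19/10::real)^2 > 33/10" by (simp add: power2_eq_square)
      ultimately show False using B by linarith
    qed
  next
    assume x1: "x = 1"
    have A: "(1 \<le> t \<and> t \<le> 1 + a) \<or> (38/25 \<le> t \<and> t \<le> 199/100) \<or> (29/10 \<le> t \<and> t \<le> 22/5)"
      using m1 x1 t by (auto simp: mem_KK)
    have B: "t^2 \<le> 99/100 \<or> (81/50 \<le> t^2 \<and> t^2 \<le> 23/10)"
      using m2 x1 by (auto simp: mem_KK)
    from A show False
    proof (elim disjE conjE)
      assume "1 \<le> t" "t \<le> 1 + a"
      hence "t^2 \<le> (1269/1000)^2" using t a by (intro sq_le) auto
      moreover have "(1269/1000::real)^2 < 81/50" by (simp add: power2_eq_square)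
      moreover have "1^2 \<le> t^2" using \<open>1 \<le> t\<close> by (intro sq_le) auto
      ultimately show False using B by simp
    next
      assume "38/25 \<le> t"
      hence "(38/25)^2 \<le> t^2" by (intro sq_le) auto
      moreover have "(38/25::real)^2 > 23/10" by (simp add: power2_eq_square)
      ultimately show False using B by linarith
    next
      assume "29/10 \<le> t"
      hence "(29/10)^2 \<le> t^2" by (intro sq_le) auto
      moreover have "(29/10::real)^2 > 23/10" by (simp add: power2_eq_square)
      ultimately show False using B by linarith
    qed
  qed
qed

end

theorem mainTheorem6:
  shows "\<exists>\<tau>0::real. \<tau>0 > 1 \<and>
     (\<forall>\<tau>::real. 1 < \<tau> \<and> \<tau> < \<tau>0 \<longrightarrow>
       (\<exists>K::real set. compact K \<and> newhouse_thickness K = \<tau> \<and>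
          (\<exists>G \<in> bounded_gaps K.
             (\<forall>G' \<in> bounded_gaps K. G' \<noteq> G \<longrightarrow> gap_len G' < gap_len G) \<and>
             \<not> (\<exists>t::real. t > 0 \<and> (\<exists>x \<in> {Inf G, Sup G}.
                    x - t \<in> K \<and> x \<in> K \<and> x + t ^ 2 \<in> K)))))"
proof (intro exI[of _ "21/20"] conjI allI impI)
  show "(21/20::real) > 1" by simp
  fix \<tau> :: real assume h: "1 < \<tau> \<and> \<tau> < 21/20"
  define a where "a = 13*\<tau>/(25*(1+\<tau>))"
  have a1: "13/50 < a" using h unfolding a_def by (simp add: field_simps)
  have a2: "a < 269/1000" using h unfolding a_def by (simp add: field_simps)
  have eq: "a/(13/25 - a) = \<tau>"
  proof -
    have "13/25 - a = 13/(25*(1+\<tau>))" using h unfolding a_def by (simp add: field_simps)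
    thus ?thesis using h unfolding a_def by (simp add: field_simps)
  qed
  show "\<exists>K::real set. compact K \<and> newhouse_thickness K = \<tau> \<and>
          (\<exists>G \<in> bounded_gaps K.
             (\<forall>G' \<in> bounded_gaps K. G' \<noteq> G \<longrightarrow> gap_len G' < gap_len G) \<and>
             \<not> (\<exists>t::real. t > 0 \<and> (\<exists>x \<in> {Inf G, Sup G}.
                    x - t \<in> K \<and> x \<in> K \<and> x + t ^ 2 \<in> K)))"
  proof (intro exI[of _ "KK a"] conjI bexI[of _ "{0<..<1}"])
    show "compact (KK a)" unfolding KK_def by (intro compact_Un compact_Icc)
    show "newhouse_thickness (KK a) = \<tau>" using thick_KK[OF a1 a2] eq by simp
    show "{0<..<1} \<in> bounded_gaps (KK a)" unfolding bgaps_KK[OF a1 a2] by simp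
    show "\<forall>G'\<in>bounded_gaps (KK a). G' \<noteq> {0<..<1} \<longrightarrow> gap_len G' < gap_len {0<..<1::real}"
      unfolding bgaps_KK[OF a1 a2] using a1 a2 by (auto simp: gap_len_Ioo)
    show "\<not> (\<exists>t::real. t > 0 \<and> (\<exists>x \<in> {Inf {0<..<1::real}, Sup {0<..<1::real}}.
                    x - t \<in> KK a \<and> x \<in> KK a \<and> x + t ^ 2 \<in> KK a))"
      using notriple[OF a1 a2] by blast
  qed
qed

end
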